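(* Consider the following constrained Bayesian persuasion setting. There is a finite state space $\Theta$, a finite action space $A=\{a_1,\dots,a_m\}$, a finite signal space $\Sigma$ with $|\Sigma|\ge |A|$, a common prior $\mu\in\Delta(\Theta)$, a sender utility $u_S:\Theta\times A\to\mathbb{R}$ and a receiver utility $u_R:\Theta\times A\to\mathbb{R}$. For each action $a_i$ there are bounds $0\le \ell_{a_i}\le h_{a_i}\le 1$, and these constraints are implementable, i.e. $\sum_i \ell_{a_i}\le 1\le \sum_i h_{a_i}$. Then for every signaling scheme $\hat\varphi:\Theta\to\Delta(\Sigma)$ there exists a signaling scheme $\varphi:\Theta\to\Delta(\Sigma)$ such that the sender's expected utility under $\varphi$ (against the receiver's constrained best response) is at least his expected utility under $\hat\varphi$ (against the receiver's constrained best response), and such that the receiver's constrained best response to $\varphi$ is deterministic (each signal is mapped to a single action with probability one). In particular, there exists a sender-optimal signaling scheme under which the receiver responds deterministically.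
   Context: A signaling scheme $\varphi:\Theta\to\Delta(\Sigma)$ is committed to by the sender before observing the state $\theta\sim\mu$; after observing $\theta$ the sender sends a signal $\sigma\sim\varphi(\theta)$. Write $\varphi(\sigma_j\mid\theta_i)$ for the probability of sending $\sigma_j$ in state $\theta_i$ and $\varphi(\sigma_j)=\sum_i\mu(\theta_i)\varphi(\sigma_j\mid\theta_i)$. A receiver strategy is a randomized mapping $\pi:\Sigma\to\Delta(A)$; write $\pi_{i j}$ for the probability that the receiver plays $a_i$ upon observing $\sigma_j$. The receiver is constrained: her strategy must satisfy, for every action $a_i$, $\ell_{a_i}\le \sum_j \varphi(\sigma_j)\,\pi_{ij}\le h_{a_i}$ (the probability of playing $a_i$, over the randomness of the state, the sender and the receiver, lies in $[\ell_{a_i},h_{a_i}]$). The receiver's (constrained) best response to $\varphi$ is a strategy satisfying these constraints that maximizes her expected utility $\mathbb{E}[u_R(\theta,a)]$ among all strategies satisfying the constraints, with ties broken in favor of the sender. The sender's expected utility under $\varphi$ is $\mathbb{E}_{\theta\sim\mu,\sigma\sim\varphi(\theta),a\sim\pi(\sigma)}[u_S(\theta,a)]$ with $\pi$ the receiver's best response; a sender-optimal scheme maximizes this quantity. *)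

theory Defs
  imports Complex_Main
begin

(* Prior mu :: 'th => real; signaling scheme phi :: 'th => 's => real
   (phi th s = probability of sending s in state th);
   receiver strategy rho :: 's => 'a => real (rho s a = prob. of playing a on s). *)

definition is_distr :: "('b::finite \<Rightarrow> real) \<Rightarrow> bool" where
  "is_distr p \<longleftrightarrow> (\<forall>x. 0 \<le> p x) \<and> (\<Sum>x\<in>UNIV. p x) = 1"

definition is_scheme :: "('th::finite \<Rightarrow> 's::finite \<Rightarrow> real) \<Rightarrow> bool" where
  "is_scheme phi \<longleftrightarrow> (\<forall>th. is_distr (phi th))"

definition is_strategy :: "('s::finite \<Rightarrow> 'a::finite \<Rightarrow> real) \<Rightarrow> bool" where
  "is_strategy rho \<longleftrightarrow> (\<forall>s. is_distr (rho s))"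

definition sig_prob :: "('th::finite \<Rightarrow> real) \<Rightarrow> ('th \<Rightarrow> 's \<Rightarrow> real) \<Rightarrow> 's \<Rightarrow> real" where
  "sig_prob mu phi s = (\<Sum>th\<in>UNIV. mu th * phi th s)"

definition feasible ::
  "('th::finite \<Rightarrow> real) \<Rightarrow> ('a::finite \<Rightarrow> real) \<Rightarrow> ('a \<Rightarrow> real) \<Rightarrow>
   ('th \<Rightarrow> 's::finite \<Rightarrow> real) \<Rightarrow> ('s \<Rightarrow> 'a \<Rightarrow> real) \<Rightarrow> bool" where
  "feasible mu l h phi rho \<longleftrightarrow> is_strategy rho \<and>
     (\<forall>a. l a \<le> (\<Sum>s\<in>UNIV. sig_prob mu phi s * rho s a) \<and>
          (\<Sum>s\<in>UNIV. sig_prob mu phi s * rho s a) \<le> h a)"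

definition exp_util ::
  "('th::finite \<Rightarrow> real) \<Rightarrow> ('th \<Rightarrow> 'a::finite \<Rightarrow> real) \<Rightarrow>
   ('th \<Rightarrow> 's::finite \<Rightarrow> real) \<Rightarrow> ('s \<Rightarrow> 'a \<Rightarrow> real) \<Rightarrow> real" where
  "exp_util mu u phi rho =
     (\<Sum>th\<in>UNIV. \<Sum>s\<in>UNIV. \<Sum>a\<in>UNIV. mu th * phi th s * rho s a * u th a)"

(* receiver's constrained best response, ties broken in favour of the sender:
   rho is feasible, maximizes receiver utility among feasible strategies, and among
   the receiver-optimal feasible strategies maximizes the sender's utility *)
definition receiver_opt where
  "receiver_opt mu l h uR phi rho \<longleftrightarrow> feasible mu l h phi rho \<and>
     (\<forall>rho'. feasible mu l h phi rho' \<longrightarrow> exp_util mu uR phi rho' \<le> exp_util mu uR phi rho)"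

definition best_response where
  "best_response mu l h uS uR phi rho \<longleftrightarrow> receiver_opt mu l h uR phi rho \<and>
     (\<forall>rho'. receiver_opt mu l h uR phi rho' \<longrightarrow> exp_util mu uS phi rho' \<le> exp_util mu uS phi rho)"

definition deterministic :: "('s \<Rightarrow> 'a \<Rightarrow> real) \<Rightarrow> bool" where
  "deterministic rho \<longleftrightarrow> (\<forall>s. \<exists>a. rho s a = 1)"

end

theory Submission
  imports Defs
begin

definition qq :: "('th::finite \<Rightarrow> 's::finite \<Rightarrow> real) \<Rightarrow> ('s \<Rightarrow> 'a::finite \<Rightarrow> real) \<Rightarrow> 'th \<Rightarrow> 'a \<Rightarrow> real" where
  "qq ph rh th a = (\<Sum>s\<in>UNIV. ph th s * rh s a)"

definition dphi :: "('th::finite \<Rightarrow> 's::finite \<Rightarrow> real) \<Rightarrow> ('s \<Rightarrow> 'a::finite \<Rightarrow> real) \<Rightarrow> ('a \<Rightarrow> 's) \<Rightarrow> 'th \<Rightarrow> 's \<Rightarrow> real" where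
  "dphi ph rh g th s = (\<Sum>a\<in>UNIV. if g a = s then qq ph rh th a else 0)"

definition TT :: "('s::finite \<Rightarrow> 'a::finite \<Rightarrow> real) \<Rightarrow> ('a \<Rightarrow> 's) \<Rightarrow> ('s \<Rightarrow> 'a \<Rightarrow> real) \<Rightarrow> 's \<Rightarrow> 'a \<Rightarrow> real" where
  "TT rh g r s a' = (\<Sum>a\<in>UNIV. rh s a * r (g a) a')"

lemma L1: "(\<Sum>s\<in>UNIV. dphi ph rh g th s * F s) = (\<Sum>a\<in>UNIV. qq ph rh th a * F (g a))"
proof -
  have "(\<Sum>s\<in>UNIV. dphi ph rh g th s * F s) = (\<Sum>s\<in>UNIV. \<Sum>a\<in>UNIV. if g a = s then qq ph rh th a * F s else 0)"
    unfolding dphi_def sum_distrib_right by (intro sum.cong refl) simp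
  also have "\<dots> = (\<Sum>a\<in>UNIV. \<Sum>s\<in>UNIV. if g a = s then qq ph rh th a * F s else 0)"
    by (rule sum.swap)
  also have "\<dots> = (\<Sum>a\<in>UNIV. qq ph rh th a * F (g a))"
    by (simp add: sum.delta)
  finally show ?thesis .
qed

lemma L_util: "exp_util mu u (dphi ph rh g) r = exp_util mu u ph (TT rh g r)"
proof -
  have "exp_util mu u (dphi ph rh g) r = (\<Sum>th\<in>UNIV. \<Sum>s\<in>UNIV. dphi ph rh g th s * (\<Sum>a'\<in>UNIV. mu th * r s a' * u th a'))"
    unfolding exp_util_def by (simp add: sum_distrib_left mult_ac)
  also have "\<dots> = (\<Sum>th\<in>UNIV. \<Sum>a\<in>UNIV. qq ph rh th a * (\<Sum>a'\<in>UNIV. mu th * r (g a) a' * u th a'))"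
    by (simp add: L1)
  also have "\<dots> = (\<Sum>th\<in>UNIV. \<Sum>a\<in>UNIV. \<Sum>a'\<in>UNIV. \<Sum>s\<in>UNIV. mu th * ph th s * rh s a * r (g a) a' * u th a')"
    unfolding qq_def by (simp add: sum_distrib_left sum_distrib_right mult_ac)
  also have "\<dots> = (\<Sum>th\<in>UNIV. \<Sum>a\<in>UNIV. \<Sum>s\<in>UNIV. \<Sum>a'\<in>UNIV. mu th * ph th s * rh s a * r (g a) a' * u th a')"
    by (rule sum.cong[OF refl], rule sum.cong[OF refl], rule sum.swap)
  also have "\<dots> = (\<Sum>th\<in>UNIV. \<Sum>s\<in>UNIV. \<Sum>a\<in>UNIV. \<Sum>a'\<in>UNIV. mu th * ph th s * rh s a * r (g a) a' * u th a')"
    by (rule sum.cong[OF refl], rule sum.swap)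
  also have "\<dots> = (\<Sum>th\<in>UNIV. \<Sum>s\<in>UNIV. \<Sum>a'\<in>UNIV. \<Sum>a\<in>UNIV. mu th * ph th s * rh s a * r (g a) a' * u th a')"
    by (rule sum.cong[OF refl], rule sum.cong[OF refl], rule sum.swap)
  also have "\<dots> = exp_util mu u ph (TT rh g r)"
    unfolding exp_util_def TT_def by (simp add: sum_distrib_left sum_distrib_right mult_ac)
  finally show ?thesis .
qed

lemma L_cons: "(\<Sum>s\<in>UNIV. sig_prob mu (dphi ph rh g) s * r s a') = (\<Sum>s\<in>UNIV. sig_prob mu ph s * TT rh g r s a')"
proof -
  have "(\<Sum>s\<in>UNIV. sig_prob mu (dphi ph rh g) s * r s a') = (\<Sum>th\<in>UNIV. \<Sum>s\<in>UNIV. dphi ph rh g th s * (mu th * r s a'))"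
    unfolding sig_prob_def sum_distrib_right by (subst sum.swap) (simp add: mult_ac)
  also have "\<dots> = (\<Sum>th\<in>UNIV. \<Sum>a\<in>UNIV. qq ph rh th a * (mu th * r (g a) a'))"
    by (simp add: L1)
  also have "\<dots> = (\<Sum>th\<in>UNIV. \<Sum>a\<in>UNIV. \<Sum>s\<in>UNIV. mu th * ph th s * rh s a * r (g a) a')"
    unfolding qq_def by (simp add: sum_distrib_left sum_distrib_right mult_ac)
  also have "\<dots> = (\<Sum>th\<in>UNIV. \<Sum>s\<in>UNIV. \<Sum>a\<in>UNIV. mu th * ph th s * rh s a * r (g a) a')"
    by (rule sum.cong[OF refl], rule sum.swap)
  also have "\<dots> = (\<Sum>s\<in>UNIV. \<Sum>th\<in>UNIV. \<Sum>a\<in>UNIV. mu th * ph th s * rh s a * r (g a) a')"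
    by (rule sum.swap)
  also have "\<dots> = (\<Sum>s\<in>UNIV. \<Sum>a\<in>UNIV. \<Sum>th\<in>UNIV. mu th * ph th s * rh s a * r (g a) a')"
    by (rule sum.cong[OF refl], rule sum.swap)
  also have "\<dots> = (\<Sum>s\<in>UNIV. sig_prob mu ph s * TT rh g r s a')"
    unfolding sig_prob_def TT_def by (simp add: sum_distrib_left sum_distrib_right mult_ac)
  finally show ?thesis .
qed

lemma L_strat: "is_strategy rh \<Longrightarrow> is_strategy r \<Longrightarrow> is_strategy (TT rh g r)"
  unfolding is_strategy_def is_distr_def TT_def
proof (intro allI conjI)
  fix s a'
  assume A: "\<forall>s. (\<forall>x. 0 \<le> rh s x) \<and> sum (rh s) UNIV = 1" "\<forall>s. (\<forall>x. 0 \<le> r s x) \<and> sum (r s) UNIV = 1"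
  show "0 \<le> (\<Sum>a\<in>UNIV. rh s a * r (g a) a')" using A by (intro sum_nonneg) auto
  fix s
  have "(\<Sum>a'\<in>UNIV. \<Sum>a\<in>UNIV. rh s a * r (g a) a') = (\<Sum>a\<in>UNIV. rh s a * (\<Sum>a'\<in>UNIV. r (g a) a'))"
    by (subst sum.swap) (simp add: sum_distrib_left)
  also have "\<dots> = 1" using A by simp
  finally show "(\<Sum>a'\<in>UNIV. \<Sum>a\<in>UNIV. rh s a * r (g a) a') = 1" .
qed

lemma L_scheme: "is_scheme ph \<Longrightarrow> is_strategy rh \<Longrightarrow> is_scheme (dphi ph rh g)"
  unfolding is_scheme_def
proof (intro allI)
  fix th
  assume A: "\<forall>th. is_distr (ph th)" "is_strategy rh"
  have "(\<Sum>s\<in>UNIV. dphi ph rh g th s) = (\<Sum>s\<in>UNIV. dphi ph rh g th s * 1)" by simp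
  also have "\<dots> = (\<Sum>a\<in>UNIV. qq ph rh th a)" by (subst L1) simp
  also have "\<dots> = (\<Sum>s\<in>UNIV. ph th s * (\<Sum>a\<in>UNIV. rh s a))"
    unfolding qq_def by (subst sum.swap) (simp add: sum_distrib_left)
  also have "\<dots> = 1" using A unfolding is_strategy_def is_distr_def by simp
  finally have S: "(\<Sum>s\<in>UNIV. dphi ph rh g th s) = 1" .
  have "0 \<le> dphi ph rh g th s" for s
    using A unfolding dphi_def qq_def is_strategy_def is_distr_def
    by (intro sum_nonneg) (auto intro!: sum_nonneg)
  with S show "is_distr (dphi ph rh g th)" unfolding is_distr_def by simp
qed

theorem proposition1:
  fixes mu :: "'th::finite \<Rightarrow> real"
    and uS uR :: "'th \<Rightarrow> 'a::finite \<Rightarrow> real"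
    and l h :: "'a \<Rightarrow> real"
    and phi_hat :: "'th \<Rightarrow> 's::finite \<Rightarrow> real"
    and rho_hat :: "'s \<Rightarrow> 'a \<Rightarrow> real"
  assumes "card (UNIV :: 'a set) \<le> card (UNIV :: 's set)"
    and "is_distr mu"
    and "\<And>a. 0 \<le> l a" and "\<And>a. l a \<le> h a" and "\<And>a. h a \<le> 1"
    and "(\<Sum>a\<in>UNIV. l a) \<le> 1" and "1 \<le> (\<Sum>a\<in>UNIV. h a)"
    and "is_scheme phi_hat"
    and "best_response mu l h uS uR phi_hat rho_hat"
  shows "\<exists>(phi :: 'th \<Rightarrow> 's \<Rightarrow> real) rho. is_scheme phi \<and> best_response mu l h uS uR phi rho \<and> deterministic rho \<and>
           exp_util mu uS phi_hat rho_hat \<le> exp_util mu uS phi rho"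
proof -
  obtain g :: "'a \<Rightarrow> 's" where g: "inj g"
    using assms(1) by (meson card_le_inj finite_UNIV inj_on_iff_surj subset_UNIV)
  define f where "f = inv g"
  have fg: "f (g a) = a" for a unfolding f_def using g by simp
  define phi where "phi = dphi phi_hat rho_hat g"
  define rho :: "'s \<Rightarrow> 'a \<Rightarrow> real" where "rho s a' = (if a' = f s then 1 else 0)" for s a'
  have BR: "best_response mu l h uS uR phi_hat rho_hat" by (rule assms(9))
  have ROh: "receiver_opt mu l h uR phi_hat rho_hat" using BR unfolding best_response_def by blast
  have Fh: "feasible mu l h phi_hat rho_hat" using ROh unfolding receiver_opt_def by blast
  have Sh: "is_strategy rho_hat" using Fh unfolding feasible_def by blast
  have Srho: "is_strategy rho" unfolding is_strategy_def is_distr_def rho_def by simp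
  have Trho: "TT rho_hat g rho = rho_hat"
    by (rule ext, rule ext) (simp add: TT_def rho_def fg if_distrib cong: if_cong)
  have U: "exp_util mu u phi r = exp_util mu u phi_hat (TT rho_hat g r)" for u r
    unfolding phi_def by (rule L_util)
  have Feq: "feasible mu l h phi r \<longleftrightarrow> is_strategy r \<and> feasible mu l h phi_hat (TT rho_hat g r)" for r
    unfolding feasible_def phi_def L_cons using L_strat[OF Sh] by blast
  have Fr: "feasible mu l h phi rho" using Feq Srho Trho Fh by simp
  have ROr: "receiver_opt mu l h uR phi rho"
    unfolding receiver_opt_def
  proof (intro conjI allI impI Fr)
    fix r assume "feasible mu l h phi r"
    then have "feasible mu l h phi_hat (TT rho_hat g r)" using Feq by blast
    then show "exp_util mu uR phi r \<le> exp_util mu uR phi rho"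
      using ROh unfolding receiver_opt_def U Trho by blast
  qed
  have BRr: "best_response mu l h uS uR phi rho"
    unfolding best_response_def
  proof (intro conjI allI impI ROr)
    fix r assume R: "receiver_opt mu l h uR phi r"
    then have Fr': "feasible mu l h phi_hat (TT rho_hat g r)" using Feq unfolding receiver_opt_def by blast
    have "exp_util mu uR phi rho \<le> exp_util mu uR phi r" using R Fr unfolding receiver_opt_def by blast
    then have "receiver_opt mu l h uR phi_hat (TT rho_hat g r)"
      using ROh Fr' unfolding receiver_opt_def U Trho by force
    then show "exp_util mu uS phi r \<le> exp_util mu uS phi rho"
      using BR unfolding best_response_def U Trho by blast
  qed
  have "is_scheme phi" unfolding phi_def by (rule L_scheme[OF assms(8) Sh])
  moreover have "deterministic rho" unfolding deterministic_def rho_def by auto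
  moreover have "exp_util mu uS phi_hat rho_hat \<le> exp_util mu uS phi rho" by (simp add: U Trho)
  ultimately show ?thesis using BRr by blast
qed

end
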